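(* Let $\delta\ge 2$ be an integer and $n\ge \max\{8\delta,\tfrac12\delta^2+2\delta+2\}$. Then for every integer $s$ with $1\le s\le \delta-1$, $$\lambda_1\big(D(K_\delta\vee(K_{n-2\delta}+\delta K_1))\big)<\lambda_1\big(D(K_s\vee(K_{n-s-(\delta-s+1)s}+sK_{\delta-s+1}))\big).$$
   Context: For a connected graph $G$, $D(G)$ is the distance matrix and $\lambda_1(D(G))$ its largest eigenvalue. $K_m$ is the complete graph, $+$ is disjoint union, $sH$ is $s$ disjoint copies of $H$, $\vee$ is the join (disjoint union plus all edges between the two parts). *)

theory Defs
  imports "Jordan_Normal_Form.Char_Poly"
begin

text \<open>A finite simple graph on the vertex set {0..<n}, given by its order n and its
  adjacency relation (only pairs of vertices below n are relevant).\<close>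
type_synonym graph = "nat \<times> (nat \<Rightarrow> nat \<Rightarrow> bool)"

definition complete_graph :: "nat \<Rightarrow> graph" where
  "complete_graph m = (m, \<lambda>u v. u < m \<and> v < m \<and> u \<noteq> v)"

text \<open>Disjoint union: the vertices of the second graph are shifted by the order of the first.\<close>
definition gunion :: "graph \<Rightarrow> graph \<Rightarrow> graph" where
  "gunion G H = (fst G + fst H,
     \<lambda>u v. (u < fst G \<and> v < fst G \<and> snd G u v) \<or>
           (fst G \<le> u \<and> fst G \<le> v \<and> u < fst G + fst H \<and> v < fst G + fst H \<and>
            snd H (u - fst G) (v - fst G)))"

definition gjoin :: "graph \<Rightarrow> graph \<Rightarrow> graph" where
  "gjoin G H = (fst G + fst H,
     \<lambda>u v. snd (gunion G H) u v \<or>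
           (u < fst G \<and> fst G \<le> v \<and> v < fst G + fst H) \<or>
           (v < fst G \<and> fst G \<le> u \<and> u < fst G + fst H))"

fun copies :: "nat \<Rightarrow> graph \<Rightarrow> graph" where
  "copies 0 H = (0, \<lambda>_ _. False)"
| "copies (Suc s) H = gunion H (copies s H)"

fun walk :: "graph \<Rightarrow> nat \<Rightarrow> nat \<Rightarrow> nat \<Rightarrow> bool" where
  "walk G 0 u v = (u = v \<and> u < fst G)"
| "walk G (Suc k) u v = (\<exists>w. w < fst G \<and> u < fst G \<and> snd G u w \<and> walk G k w v)"

definition gdist :: "graph \<Rightarrow> nat \<Rightarrow> nat \<Rightarrow> nat" where
  "gdist G u v = (LEAST k. walk G k u v)"

definition distance_matrix :: "graph \<Rightarrow> real mat" where
  "distance_matrix G = mat (fst G) (fst G) (\<lambda>(i, j). real (gdist G i j))"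

text \<open>Largest eigenvalue (the distance matrix is real symmetric, so all eigenvalues are real).\<close>
definition lambda1 :: "real mat \<Rightarrow> real" where
  "lambda1 A = Max {x. eigenvalue A x}"

end

theory Submission
  imports Defs
begin


lemma fst_cg[simp]: "fst (complete_graph c) = c" by (simp add: complete_graph_def)
lemma snd_cg[simp]: "snd (complete_graph c) u v = (u < c \<and> v < c \<and> u \<noteq> v)" by (simp add: complete_graph_def)

lemma fst_copies: "fst (copies q H) = q * fst H"
  by (induct q) (auto simp: gunion_def)

lemma snd_copies:
  assumes c: "0 < c"
  shows "snd (copies q (complete_graph c)) u v \<longleftrightarrow> (u < q*c \<and> v < q*c \<and> u \<noteq> v \<and> u div c = v div c)"
proof (induct q arbitrary: u v)
  case 0
  then show ?case by simp
next
  case (Suc q)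
  have f: "fst (copies q (complete_graph c)) = q * c" by (simp add: fst_copies)
  show ?case
  proof (cases "u < c")
    case True
    then show ?thesis using c
      by (auto simp: gunion_def f Suc le_div_geq div_eq_0_iff)
  next
    case False
    then show ?thesis using c
      by (cases "v < c") (auto simp: gunion_def f Suc le_div_geq div_eq_0_iff)
  qed
qed

definition BG :: "nat \<Rightarrow> nat \<Rightarrow> nat \<Rightarrow> nat \<Rightarrow> graph" where
  "BG a m q c = gjoin (complete_graph a) (gunion (complete_graph m) (copies q (complete_graph c)))"

definition cnd :: "nat \<Rightarrow> nat \<Rightarrow> nat \<Rightarrow> nat \<Rightarrow> nat \<Rightarrow> bool" where
  "cnd a m c u v = (u < a \<or> v < a \<or> (u < a+m \<and> v < a+m) \<or> (a+m \<le> u \<and> a+m \<le> v \<and> (u-a-m) div c = (v-a-m) div c))"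

lemma fst_BG[simp]: "fst (BG a m q c) = a + m + q * c"
  by (simp add: BG_def gjoin_def gunion_def fst_copies)

lemma snd_BG:
  assumes "0 < c"
  shows "snd (BG a m q c) u v \<longleftrightarrow> u \<noteq> v \<and> u < a + m + q*c \<and> v < a + m + q*c \<and> cnd a m c u v"
proof -
  let ?X = "gunion (complete_graph m) (copies q (complete_graph c))"
  have fX: "fst ?X = m + q*c" by (simp add: gunion_def fst_copies)
  have sX: "snd ?X w z \<longleftrightarrow> w \<noteq> z \<and> w < m + q*c \<and> z < m + q*c \<and>
     ((w < m \<and> z < m) \<or> (m \<le> w \<and> m \<le> z \<and> (w-m) div c = (z-m) div c))" for w z
  proof -
    have "snd ?X w z \<longleftrightarrow> (w < m \<and> z < m \<and> w \<noteq> z) \<or> (m \<le> w \<and> m \<le> z \<and> w < m + q*c \<and> z < m + q*c \<and>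
       (w - m < q*c \<and> z - m < q*c \<and> w - m \<noteq> z - m \<and> (w-m) div c = (z-m) div c))"
      unfolding gunion_def by (simp add: fst_copies snd_copies[OF assms]) blast
    also have "\<dots> \<longleftrightarrow> w \<noteq> z \<and> w < m + q*c \<and> z < m + q*c \<and>
     ((w < m \<and> z < m) \<or> (m \<le> w \<and> m \<le> z \<and> (w-m) div c = (z-m) div c))" by linarith
    finally show ?thesis .
  qed
  have "snd (BG a m q c) u v \<longleftrightarrow> ((u < a \<and> v < a \<and> u \<noteq> v) \<or> (a \<le> u \<and> a \<le> v \<and> u < a + (m + q*c) \<and> v < a + (m+q*c) \<and> snd ?X (u-a) (v-a)))
     \<or> (u < a \<and> a \<le> v \<and> v < a + (m+q*c)) \<or> (v < a \<and> a \<le> u \<and> u < a + (m+q*c))"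
    unfolding BG_def gjoin_def gunion_def[of "complete_graph a" ?X] by (simp add: fX) blast
  also have "\<dots> \<longleftrightarrow> u \<noteq> v \<and> u < a + m + q*c \<and> v < a + m + q*c \<and> cnd a m c u v"
    unfolding sX cnd_def by (auto simp: diff_diff_left)
  finally show ?thesis .
qed

lemma walk1: "walk G (Suc 0) u v \<longleftrightarrow> u < fst G \<and> v < fst G \<and> snd G u v"
  by auto

lemma gdist_BG:
  assumes a: "0 < a" and c: "0 < c" and u: "u < a + m + q*c" and v: "v < a + m + q*c"
  shows "gdist (BG a m q c) u v = (if u = v then 0 else if cnd a m c u v then 1 else 2)"
proof -
  let ?G = "BG a m q c"
  show ?thesis
  proof (cases "u = v")
    case True
    have "walk ?G 0 u v" using True u by simp
    then show ?thesis using True unfolding gdist_def by (simp add: Least_eq_0)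
  next
    case False
    show ?thesis
    proof (cases "cnd a m c u v")
      case True
      have w1: "walk ?G 1 u v" using True False u v c by (simp add: snd_BG)
      have "(LEAST k. walk ?G k u v) = 1"
      proof (rule Least_equality)
        show "walk ?G 1 u v" by (rule w1)
        fix y assume "walk ?G y u v"
        then show "1 \<le> y" using False by (cases y) auto
      qed
      then show ?thesis using True False unfolding gdist_def by simp
    next
      case nc: False
      have ua: "a \<le> u" "a \<le> v" using nc unfolding cnd_def by auto
      have w2: "walk ?G 2 u v"
      proof -
        have "snd ?G u 0" using ua a u c by (simp add: snd_BG cnd_def)
        moreover have "snd ?G 0 v" using ua a v c by (simp add: snd_BG cnd_def)
        ultimately show ?thesis using a u v by (auto simp: numeral_2_eq_2 intro!: exI[of _ 0])
      qed
      have "(LEAST k. walk ?G k u v) = 2"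
      proof (rule Least_equality)
        show "walk ?G 2 u v" by (rule w2)
        fix y assume wy: "walk ?G y u v"
        show "2 \<le> y"
        proof (rule ccontr)
          assume "\<not> 2 \<le> y"
          then have "y = 0 \<or> y = Suc 0" by auto
          then show False using wy False nc c by (auto simp: snd_BG)
        qed
      qed
      then show ?thesis using nc False unfolding gdist_def by simp
    qed
  qed
qed




lemma sum_ne:
  assumes "u \<in> {l..<h::nat}"
  shows "(\<Sum>j\<in>{l..<h}. (if j = u then 0 else k::real)) = k * (real (h - l) - 1)"
proof -
  have "(\<Sum>j\<in>{l..<h}. (if j = u then 0 else k::real)) = (\<Sum>j\<in>{l..<h}. k - (if j = u then k else 0))"
    by (rule sum.cong) auto
  also have "\<dots> = k * real (h - l) - k" using assms by (simp add: sum_subtractf)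
  finally show ?thesis by (simp add: algebra_simps)
qed

lemma div_block:
  assumes c: "0 < (c::nat)"
  shows "t div c = i \<longleftrightarrow> i*c \<le> t \<and> t < i*c + c"
proof
  assume "t div c = i"
  moreover have "t = t div c * c + t mod c" by simp
  moreover have "t mod c < c" using c by simp
  ultimately show "i*c \<le> t \<and> t < i*c + c" by (metis add_less_cancel_left le_add1)
next
  assume "i*c \<le> t \<and> t < i*c + c"
  then show "t div c = i" by (intro div_nat_eqI) (auto simp: algebra_simps)
qed

lemma blk2:
  fixes B q c u :: nat
  assumes c: "0 < c" and u: "u \<in> {B..<B+q*c}"
  shows "(\<Sum>j\<in>{B..<B+q*c}. (if j = u then 0 else if (u-B) div c = (j-B) div c then 1 else 2::real))
     = 2*real q*real c - real c - 1"
proof -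
  define i where "i = (u-B) div c"
  have iq: "i < q" using u c unfolding i_def by (intro less_mult_imp_div_less) auto
  have "(\<Sum>j\<in>{B..<B+q*c}. (if j = u then 0 else if (u-B) div c = (j-B) div c then 1 else 2::real))
      = (\<Sum>j\<in>{B..<B+q*c}. 2 - (if (j-B) div c = i then 1 else 0) - (if j = u then 1 else 0))"
    by (rule sum.cong) (auto simp: i_def)
  also have "\<dots> = 2 * real (q*c) - (\<Sum>j\<in>{B..<B+q*c}. (if (j-B) div c = i then 1 else 0)) - 1"
    using u by (simp add: sum_subtractf)
  also have "(\<Sum>j\<in>{B..<B+q*c}. (if (j-B) div c = i then 1 else 0::real)) = real (card {j\<in>{B..<B+q*c}. (j-B) div c = i})"
    by (simp add: sum.inter_filter[symmetric])
  also have "{j\<in>{B..<B+q*c}. (j-B) div c = i} = {B+i*c..<B+i*c+c}"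
  proof -
    have "i*c + c \<le> q*c" using iq by (metis Suc_leI add.commute mult_Suc mult_le_mono1)
    then show ?thesis using c by (auto simp: div_block)
  qed
  finally show ?thesis by simp
qed




definition liftv :: "nat \<Rightarrow> nat \<Rightarrow> nat \<Rightarrow> nat \<Rightarrow> real \<Rightarrow> real \<Rightarrow> real \<Rightarrow> real vec" where
  "liftv a m q c x y z = vec (a+m+q*c) (\<lambda>u. if u < a then x else if u < a+m then y else z)"

definition dv :: "nat \<Rightarrow> nat \<Rightarrow> nat \<Rightarrow> nat \<Rightarrow> nat \<Rightarrow> real" where
  "dv a m c u j = (if u = j then 0 else if cnd a m c u j then 1 else 2)"

lemma rowsum:
  assumes a: "0 < a" and c: "0 < c" and u: "u < a + m + q*c"
  shows "(\<Sum>j\<in>{0..<a+m+q*c}. dv a m c u j * (if j < a then x else if j < a+m then y else z))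
    = (if u < a then (real a - 1)*x + real m*y + real q*real c*z
       else if u < a+m then real a*x + (real m - 1)*y + 2*real q*real c*z
       else real a*x + 2*real m*y + (2*real q*real c - real c - 1)*z)"
proof -
  let ?g = "\<lambda>j. dv a m c u j * (if j < a then x else if j < a+m then y else z)"
  have sp1: "sum ?g {0..<a+m+q*c} = sum ?g {0..<a+m} + sum ?g {a+m..<a+m+q*c}"
    by (rule sum.atLeastLessThan_concat[symmetric]) simp_all
  have sp2: "sum ?g {0..<a+m} = sum ?g {0..<a} + sum ?g {a..<a+m}"
    by (rule sum.atLeastLessThan_concat[symmetric]) simp_all
  have split: "sum ?g {0..<a+m+q*c} = sum ?g {0..<a} + sum ?g {a..<a+m} + sum ?g {a+m..<a+m+q*c}"
    unfolding sp1 sp2 ..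
  show ?thesis
  proof (cases "u < a")
    case True
    have s0: "sum ?g {0..<a} = (\<Sum>j\<in>{0..<a}. if j = u then 0 else x)"
      by (rule sum.cong) (auto simp: dv_def cnd_def)
    have s1: "sum ?g {a..<a+m} = (\<Sum>j\<in>{a..<a+m}. y)"
      using True by (intro sum.cong) (auto simp: dv_def cnd_def)
    have s2: "sum ?g {a+m..<a+m+q*c} = (\<Sum>j\<in>{a+m..<a+m+q*c}. z)"
      using True by (intro sum.cong) (auto simp: dv_def cnd_def)
    show ?thesis using True unfolding split s0 s1 s2
      by (simp add: sum_ne[of u 0 a x])
  next
    case F0: False
    show ?thesis
    proof (cases "u < a+m")
      case True
      have s0: "sum ?g {0..<a} = (\<Sum>j\<in>{0..<a}. x)"
        using F0 by (intro sum.cong) (auto simp: dv_def cnd_def)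
      have s1: "sum ?g {a..<a+m} = (\<Sum>j\<in>{a..<a+m}. if j = u then 0 else y)"
        using True F0 by (intro sum.cong) (auto simp: dv_def cnd_def)
      have s2: "sum ?g {a+m..<a+m+q*c} = (\<Sum>j\<in>{a+m..<a+m+q*c}. 2*z)"
        using True F0 by (intro sum.cong) (auto simp: dv_def cnd_def)
      show ?thesis using True F0 unfolding split s0 s1 s2
        by (simp add: sum_ne[of u a "a+m" y] algebra_simps)
    next
      case False
      have s0: "sum ?g {0..<a} = (\<Sum>j\<in>{0..<a}. x)"
        using F0 by (intro sum.cong) (auto simp: dv_def cnd_def)
      have s1: "sum ?g {a..<a+m} = (\<Sum>j\<in>{a..<a+m}. 2*y)"
        using False F0 by (intro sum.cong) (auto simp: dv_def cnd_def)
      have s2: "sum ?g {a+m..<a+m+q*c} = (\<Sum>j\<in>{a+m..<a+m+q*c}.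
            (if j = u then 0 else if (u-(a+m)) div c = (j-(a+m)) div c then 1 else 2) * z)"
        using False F0 by (intro sum.cong) (auto simp: dv_def cnd_def diff_diff_left)
      have b2: "(\<Sum>j\<in>{a+m..<a+m+q*c}.
            (if j = u then 0 else if (u-(a+m)) div c = (j-(a+m)) div c then 1 else 2::real) * z)
           = (2*real q*real c - real c - 1) * z"
        unfolding sum_distrib_right[symmetric] using False u c by (subst blk2) auto
      show ?thesis using False F0 unfolding split s0 s1 s2 b2
        by (simp add: algebra_simps)
    qed
  qed
qed

lemma dm_entry:
  assumes a: "0 < a" and c: "0 < c" and u: "u < a + m + q*c" and j: "j < a + m + q*c"
  shows "distance_matrix (BG a m q c) $$ (u, j) = dv a m c u j"
  using assms by (simp add: distance_matrix_def gdist_BG dv_def)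

lemma dm_carrier: "distance_matrix (BG a m q c) \<in> carrier_mat (a+m+q*c) (a+m+q*c)"
  by (simp add: distance_matrix_def)

lemma dm_mult:
  assumes a: "0 < a" and c: "0 < c"
  shows "distance_matrix (BG a m q c) *\<^sub>v liftv a m q c x y z =
    liftv a m q c ((real a - 1)*x + real m*y + real q*real c*z)
       (real a*x + (real m - 1)*y + 2*real q*real c*z)
       (real a*x + 2*real m*y + (2*real q*real c - real c - 1)*z)"
proof (rule eq_vecI)
  show "dim_vec (distance_matrix (BG a m q c) *\<^sub>v liftv a m q c x y z) = dim_vec (liftv a m q c ((real a - 1)*x + real m*y + real q*real c*z)
       (real a*x + (real m - 1)*y + 2*real q*real c*z)
       (real a*x + 2*real m*y + (2*real q*real c - real c - 1)*z))"
    by (simp add: liftv_def distance_matrix_def)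
  fix u assume "u < dim_vec (liftv a m q c ((real a - 1)*x + real m*y + real q*real c*z)
       (real a*x + (real m - 1)*y + 2*real q*real c*z)
       (real a*x + 2*real m*y + (2*real q*real c - real c - 1)*z))"
  then have u: "u < a + m + q*c" by (simp add: liftv_def)
  have "(distance_matrix (BG a m q c) *\<^sub>v liftv a m q c x y z) $ u
     = (\<Sum>j\<in>{0..<a+m+q*c}. distance_matrix (BG a m q c) $$ (u, j) * (liftv a m q c x y z) $ j)"
    using u by (simp add: scalar_prod_def liftv_def distance_matrix_def)
  also have "\<dots> = (\<Sum>j\<in>{0..<a+m+q*c}. dv a m c u j * (if j < a then x else if j < a+m then y else z))"
    by (rule sum.cong) (auto simp: dm_entry[OF a c u] liftv_def)
  also have "\<dots> = (if u < a then (real a - 1)*x + real m*y + real q*real c*z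
       else if u < a+m then real a*x + (real m - 1)*y + 2*real q*real c*z
       else real a*x + 2*real m*y + (2*real q*real c - real c - 1)*z)" by (rule rowsum[OF a c u])
  finally show "(distance_matrix (BG a m q c) *\<^sub>v liftv a m q c x y z) $ u = liftv a m q c ((real a - 1)*x + real m*y + real q*real c*z)
       (real a*x + (real m - 1)*y + 2*real q*real c*z)
       (real a*x + 2*real m*y + (2*real q*real c - real c - 1)*z) $ u"
    using u by (simp add: liftv_def)
qed




lemma finite_eig:
  assumes A: "(A :: real mat) \<in> carrier_mat N N"
  shows "finite {x. eigenvalue A x}"
proof -
  have "char_poly A \<noteq> 0"
    using degree_monic_char_poly[OF A] by auto
  then have "finite {x. poly (char_poly A) x = 0}" by (rule poly_roots_finite)
  then show ?thesis using eigenvalue_root_char_poly[OF A] by simp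
qed

lemma cw_bound:
  assumes A: "(A :: real mat) \<in> carrier_mat N N"
    and nn: "\<And>i j. i < N \<Longrightarrow> j < N \<Longrightarrow> 0 \<le> A $$ (i,j)"
    and w: "w \<in> carrier_vec N" and wpos: "\<And>i. i < N \<Longrightarrow> 0 < w $ i"
    and Aw: "A *\<^sub>v w = \<rho> \<cdot>\<^sub>v w"
    and ev: "eigenvalue A x"
  shows "x \<le> \<rho>"
proof -
  obtain v where v: "v \<in> carrier_vec N" "v \<noteq> 0\<^sub>v N" "A *\<^sub>v v = x \<cdot>\<^sub>v v"
    using ev A unfolding eigenvalue_def eigenvector_def by auto
  obtain k where k: "k < N" "v $ k \<noteq> 0"
    using v(1,2) by (metis carrier_vecD eq_vecI index_zero_vec(1) index_zero_vec(2))
  define r where "r i = \<bar>v $ i\<bar> / w $ i" for i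
  define S where "S = r ` {0..<N}"
  have fS: "finite S" "S \<noteq> {}" using k unfolding S_def by auto
  obtain i0 where i0: "i0 < N" "r i0 = Max S"
    using Max_in[OF fS] unfolding S_def by auto
  have rle: "r j \<le> r i0" if "j < N" for j using i0 fS that unfolding S_def by auto
  have rk: "0 < r k" using k wpos unfolding r_def by auto
  define \<theta> where "\<theta> = r i0"
  have th: "0 < \<theta>" using rle[OF k(1)] rk unfolding \<theta>_def by simp
  have vb: "\<bar>v $ j\<bar> \<le> \<theta> * w $ j" if "j < N" for j
    using rle[OF that] wpos[OF that] unfolding \<theta>_def r_def by (simp add: divide_le_eq)
  have vi0: "\<bar>v $ i0\<bar> = \<theta> * w $ i0" using wpos[OF i0(1)] unfolding \<theta>_def r_def by simp
  have vi0p: "0 < \<bar>v $ i0\<bar>" using vi0 th wpos[OF i0(1)] by simp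
  have rowv: "(A *\<^sub>v v) $ i0 = (\<Sum>j\<in>{0..<N}. A $$ (i0,j) * v $ j)"
    using A v(1) i0(1) by (simp add: scalar_prod_def)
  have roww: "(A *\<^sub>v w) $ i0 = (\<Sum>j\<in>{0..<N}. A $$ (i0,j) * w $ j)"
    using A w i0(1) by (simp add: scalar_prod_def)
  have "\<bar>x\<bar> * \<bar>v $ i0\<bar> = \<bar>(A *\<^sub>v v) $ i0\<bar>" using v(1,3) i0(1) by (simp add: abs_mult)
  also have "\<dots> \<le> (\<Sum>j\<in>{0..<N}. \<bar>A $$ (i0,j) * v $ j\<bar>)" unfolding rowv by (rule sum_abs)
  also have "\<dots> \<le> (\<Sum>j\<in>{0..<N}. A $$ (i0,j) * (\<theta> * w $ j))"
  proof (rule sum_mono)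
    fix j assume "j \<in> {0..<N}"
    then have j: "j < N" by simp
    show "\<bar>A $$ (i0,j) * v $ j\<bar> \<le> A $$ (i0,j) * (\<theta> * w $ j)"
      using nn[OF i0(1) j] vb[OF j] by (simp add: abs_mult mult_left_mono)
  qed
  also have "\<dots> = \<theta> * (A *\<^sub>v w) $ i0" unfolding roww
    by (simp add: sum_distrib_left algebra_simps)
  also have "\<dots> = \<rho> * \<bar>v $ i0\<bar>" using Aw w i0(1) vi0 by simp
  finally have "\<bar>x\<bar> * \<bar>v $ i0\<bar> \<le> \<rho> * \<bar>v $ i0\<bar>" .
  then have "\<bar>x\<bar> \<le> \<rho>" using vi0p by simp
  then show ?thesis by simp
qed




definition det2 :: "real \<Rightarrow> real \<Rightarrow> real \<Rightarrow> real \<Rightarrow> real \<Rightarrow> real" where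
  "det2 a m q c l = (l - m + 1) * (l - (2*q*c - c - 1)) - 4*m*q*c"

definition pp :: "real \<Rightarrow> real \<Rightarrow> real \<Rightarrow> real \<Rightarrow> real \<Rightarrow> real" where
  "pp a m q c l = (l - a + 1) * det2 a m q c l - m*a*(l+c+1) - q*c*a*(l+m+1)"

lemma liftv_smult: "l \<cdot>\<^sub>v liftv a m q c x y z = liftv a m q c (l*x) (l*y) (l*z)"
  by (rule eq_vecI) (auto simp: liftv_def)

lemma eigvec_BG:
  assumes a: "0 < a" and c: "0 < c"
    and p: "pp (real a) (real m) (real q) (real c) l = 0"
  shows "distance_matrix (BG a m q c) *\<^sub>v
     liftv a m q c (det2 (real a) (real m) (real q) (real c) l) (real a*(l+real c+1)) (real a*(l+real m+1))
   = l \<cdot>\<^sub>v liftv a m q c (det2 (real a) (real m) (real q) (real c) l) (real a*(l+real c+1)) (real a*(l+real m+1))"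
proof -
  let ?A = "real a" and ?M = "real m" and ?Q = "real q" and ?C = "real c"
  let ?d = "det2 ?A ?M ?Q ?C l"
  have e1: "(?A - 1) * ?d + ?M * (?A*(l+?C+1)) + ?Q*?C*(?A*(l+?M+1)) = l * ?d"
    using p unfolding pp_def by (simp add: algebra_simps)
  have e2: "?A * ?d + (?M - 1) * (?A*(l+?C+1)) + 2*?Q*?C*(?A*(l+?M+1)) = l * (?A*(l+?C+1))"
    unfolding det2_def by (simp add: algebra_simps)
  have e3: "?A * ?d + 2*?M * (?A*(l+?C+1)) + (2*?Q*?C - ?C - 1)*(?A*(l+?M+1)) = l * (?A*(l+?M+1))"
    unfolding det2_def by (simp add: algebra_simps)
  show ?thesis unfolding dm_mult[OF a c] liftv_smult e1 e2 e3 ..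
qed

lemma root_eig:
  assumes a: "0 < a" and c: "0 < c" and q: "0 < q" and l: "0 \<le> l"
    and p: "pp (real a) (real m) (real q) (real c) l = 0"
  shows "eigenvalue (distance_matrix (BG a m q c)) l"
proof -
  let ?v = "liftv a m q c (det2 (real a) (real m) (real q) (real c) l) (real a*(l+real c+1)) (real a*(l+real m+1))"
  have N: "a + m < a + m + q*c" using q c by simp
  have "?v $ (a+m) = real a*(l+real m+1)" using N by (simp add: liftv_def)
  moreover have "real a*(l+real m+1) \<noteq> 0" using a l by simp
  ultimately have "?v \<noteq> 0\<^sub>v (a+m+q*c)" using N by auto
  then show ?thesis unfolding eigenvalue_def eigenvector_def using eigvec_BG[OF a c p]
    by (auto simp: liftv_def distance_matrix_def intro!: exI[of _ ?v])
qed

lemma root_max: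
  assumes a: "0 < a" and c: "0 < c" and q: "0 < q" and l: "real a - 1 \<le> l" "0 \<le> l"
    and p: "pp (real a) (real m) (real q) (real c) l = 0"
    and ev: "eigenvalue (distance_matrix (BG a m q c)) x"
  shows "x \<le> l"
proof -
  let ?d = "det2 (real a) (real m) (real q) (real c) l"
  have pos: "0 < real m*real a*(l+real c+1) + real q*real c*real a*(l+real m+1)"
    using a c q l by (intro add_nonneg_pos) (auto intro!: mult_pos_pos)
  have "(l - real a + 1) * ?d = real m*real a*(l+real c+1) + real q*real c*real a*(l+real m+1)"
    using p unfolding pp_def by simp
  with pos have "0 < (l - real a + 1) * ?d" by simp
  moreover have "0 \<le> l - real a + 1" using l by simp
  ultimately have dpos: "0 < ?d" by (simp add: zero_less_mult_iff)
  let ?v = "liftv a m q c ?d (real a*(l+real c+1)) (real a*(l+real m+1))"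
  show ?thesis
  proof (rule cw_bound[OF dm_carrier _ _ _ eigvec_BG[OF a c p] ev])
    show "0 \<le> distance_matrix (BG a m q c) $$ (i, j)" if "i < a+m+q*c" "j < a+m+q*c" for i j
      using that by (simp add: distance_matrix_def)
    show "?v \<in> carrier_vec (a+m+q*c)" by (simp add: liftv_def)
    show "0 < ?v $ i" if "i < a+m+q*c" for i
      using that dpos a c l by (auto simp: liftv_def)
  qed
qed




lemma I1:
  fixes d n :: real
  assumes d: "2 \<le> d" and n: "8*d \<le> n"
  shows "pp d (n-2*d) d 1 n < 0"
proof -
  define a where "a = d - 2"
  define t where "t = n - 8*d"
  have a0: "0 \<le> a" and t0: "0 \<le> t" using d n by (auto simp: a_def t_def)
  have eq: "- pp d (n-2*d) d 1 n = 146*a^3 + 42*a^2*t + 831*a^2 + 3*a*t^2 + 155*a*t + 1548*a + 5*t^2 + 139*t + 938"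
    unfolding a_def t_def pp_def det2_def by (simp add: algebra_simps power2_eq_square power3_eq_cube)
  have "0 < 146*a^3 + 42*a^2*t + 831*a^2 + 3*a*t^2 + 155*a*t + 1548*a + 5*t^2 + 139*t + 938"
    using a0 t0 by (intro add_nonneg_pos mult_nonneg_nonneg zero_le_power) auto
  then show ?thesis using eq by linarith
qed

lemma hom1:
  fixes d n x :: real
  shows "n^3 * pp d (n-2*d) d 1 x = (let y = x*n in n^4*d^2 - 2*n^4*d - 2*n^4 - 2*n^3*d^3 + 5*n^3*d^2 - 2*n^3*d*y - 3*n^3*y + 2*n^3 + 5*n^2*d^2*y - n^2*d*y - n^2*y^2 + 5*n^2*y - n*d*y^2 + 4*n*y^2 + y^3)"
  unfolding pp_def det2_def Let_def by (simp add: algebra_simps power2_eq_square power3_eq_cube power4_eq_xxxx)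

lemma I2:
  fixes d n :: real
  assumes d: "2 \<le> d" and n: "8*d \<le> n"
  shows "0 \<le> pp d (n-2*d) d 1 (n + 3*d - 1 - 6*d^2/n)"
proof -
  define U where "U = n + 3*d - 1 - 6*d^2/n"
  have n0: "0 < n" using d n by simp
  have Un: "U*n = n^2 + (3*d-1)*n - 6*d^2" unfolding U_def using n0 by (simp add: field_simps power2_eq_square)
  have e1: "n^3 * pp d (n-2*d) d 1 U = 6*n^4*d^2 + 4*n^4*d - 17*n^3*d^3 + 6*n^3*d^2 - 84*n^2*d^4 - 42*n^2*d^3 + 288*n*d^5 + 36*n*d^4 - 216*d^6"
    unfolding hom1 Let_def Un by (simp add: eval_nat_numeral power_Suc algebra_simps)
  define a where "a = d - 2"
  define t where "t = n - 8*d"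
  have a0: "0 \<le> a" and t0: "0 \<le> t" using d n by (auto simp: a_def t_def)
  have e2: "6*n^4*d^2 + 4*n^4*d - 17*n^3*d^3 + 6*n^3*d^2 - 84*n^2*d^4 - 42*n^2*d^3 + 288*n*d^5 + 36*n*d^4 - 216*d^6 = 12584*a^6 + 7968*a^5*t + 168064*a^5 + 1812*a^4*t^2 + 88388*a^4*t + 925600*a^4 + 175*a^3*t^3 + 16134*a^3*t^2 + 388384*a^3*t + 2695680*a^3 + 6*a^2*t^4 + 1184*a^2*t^3 + 53316*a^2*t^2 + 846432*a^2*t + 4384640*a^2 + 28*a*t^4 + 2636*a*t^3 + 77640*a*t^2 + 916096*a*t + 3780608*a + 32*t^4 + 1936*t^3 + 42096*t^2 + 394304*t + 1351168"
    unfolding a_def t_def by (simp add: eval_nat_numeral power_Suc algebra_simps)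
  have "0 \<le> 12584*a^6 + 7968*a^5*t + 168064*a^5 + 1812*a^4*t^2 + 88388*a^4*t + 925600*a^4 + 175*a^3*t^3 + 16134*a^3*t^2 + 388384*a^3*t + 2695680*a^3 + 6*a^2*t^4 + 1184*a^2*t^3 + 53316*a^2*t^2 + 846432*a^2*t + 4384640*a^2 + 28*a*t^4 + 2636*a*t^3 + 77640*a*t^2 + 916096*a*t + 3780608*a + 32*t^4 + 1936*t^3 + 42096*t^2 + 394304*t + 1351168"
    using a0 t0 by (intro add_nonneg_nonneg mult_nonneg_nonneg zero_le_power) auto
  then have "0 \<le> n^3 * pp d (n-2*d) d 1 U" using e1 e2 by simp
  then show ?thesis unfolding U_def[symmetric] using n0 by (simp add: zero_le_mult_iff)
qed

lemma fexp:
  fixes n s k r :: real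
  shows "pp s (n - s - (s+k-s+1)*s) s (s+k-s+1) (n+r) - pp (s+k) (n-2*(s+k)) (s+k) 1 (n+r)
   = k * ((-3*(s-1)*n^2 + n*(2*s^2*k+8*s^2+s*k-14*s-6*k+4) + (-(s^3*k)-3*s^3+2*s^2*k+13*s^2+7*s*k-9*s+2*k^2-5*k+1))
        + (-(4*s-5)*n + (2*s^2*k+7*s^2+s*k-10*s-5*k+3))*r + (2-s)*r^2)"
  unfolding pp_def det2_def by (simp add: algebra_simps power2_eq_square power3_eq_cube)

lemma gsub:
  fixes a b t n s k :: real
  assumes "s = a+2" "k = b+1" "2*n = (a+b+5)^2 + 2*t"
  shows "- 4 * (-3*(s-1)*n^2 + n*(2*s^2*k+8*s^2+s*k-14*s-6*k+4) + (-(s^3*k)-3*s^3+2*s^2*k+13*s^2+7*s*k-9*s+2*k^2-5*k+1)) = 3*a^5 + 8*a^4*b + 43*a^4 + 10*a^3*b^2 + 98*a^3*b + 12*a^3*t + 272*a^3 + 8*a^2*b^3 + 102*a^2*b^2 + 16*a^2*b*t + 500*a^2*b + 92*a^2*t + 922*a^2 + 3*a*b^4 + 54*a*b^3 + 12*a*b^2*t + 380*a*b^2 + 108*a*b*t + 1270*a*b + 12*a*t^2 + 312*a*t + 1745*a + 3*b^4 + 52*b^3 + 12*b^2*t + 338*b^2 + 104*b*t + 1008*b + 12*t^2 + 252*t + 1187"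
proof -
  have "- 4 * (-3*(s-1)*n^2 + n*(2*s^2*k+8*s^2+s*k-14*s-6*k+4) + (-(s^3*k)-3*s^3+2*s^2*k+13*s^2+7*s*k-9*s+2*k^2-5*k+1)) = 3*(s-1)*(2*n)^2 - 2*(2*n)*(2*s^2*k+8*s^2+s*k-14*s-6*k+4) - 4*(-(s^3*k)-3*s^3+2*s^2*k+13*s^2+7*s*k-9*s+2*k^2-5*k+1)"
    by (simp add: algebra_simps power2_eq_square)
  also have "\<dots> = 3*a^5 + 8*a^4*b + 43*a^4 + 10*a^3*b^2 + 98*a^3*b + 12*a^3*t + 272*a^3 + 8*a^2*b^3 + 102*a^2*b^2 + 16*a^2*b*t + 500*a^2*b + 92*a^2*t + 922*a^2 + 3*a*b^4 + 54*a*b^3 + 12*a*b^2*t + 380*a*b^2 + 108*a*b*t + 1270*a*b + 12*a*t^2 + 312*a*t + 1745*a + 3*b^4 + 52*b^3 + 12*b^2*t + 338*b^2 + 104*b*t + 1008*b + 12*t^2 + 252*t + 1187"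
    unfolding assms by (simp add: eval_nat_numeral power_Suc algebra_simps)
  finally show ?thesis .
qed

lemma hsub:
  fixes a b t n s k :: real
  assumes "s = a+2" "k = b+1" "2*n = (a+b+5)^2 + 2*t"
  shows "- 2 * (-(4*s-5)*n + (2*s^2*k+7*s^2+s*k-10*s-5*k+3)) = 4*a^3 + 4*a^2*b + 25*a^2 + 4*a*b^2 + 28*a*b + 8*a*t + 76*a + 3*b^2 + 20*b + 6*t + 43"
proof -
  have "- 2 * (-(4*s-5)*n + (2*s^2*k+7*s^2+s*k-10*s-5*k+3)) = (4*s-5)*(2*n) - 2*(2*s^2*k+7*s^2+s*k-10*s-5*k+3)"
    by (simp add: algebra_simps)
  also have "\<dots> = 4*a^3 + 4*a^2*b + 25*a^2 + 4*a*b^2 + 28*a*b + 8*a*t + 76*a + 3*b^2 + 20*b + 6*t + 43"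
    unfolding assms by (simp add: eval_nat_numeral power_Suc algebra_simps)
  finally show ?thesis .
qed


lemma I3:
  fixes d n s l :: real
  assumes s: "2 \<le> s" and ds: "1 \<le> d - s" and n: "(d+2)^2 \<le> 2*n" and l: "n \<le> l"
  shows "pp s (n - s - (d-s+1)*s) s (d-s+1) l - pp d (n-2*d) d 1 l < 0"
proof -
  define k where "k = d - s"
  define r where "r = l - n"
  define a where "a = s - 2"
  define b where "b = k - 1"
  define t where "t = n - (d+2)^2/2"
  have a0: "0 \<le> a" and b0: "0 \<le> b" and t0: "0 \<le> t" and r0: "0 \<le> r"
    using s ds n l by (auto simp: a_def b_def t_def r_def k_def)
  have dk: "d = s + k" and lr: "l = n + r" by (auto simp: k_def r_def)
  have eq: "pp s (n - s - (d-s+1)*s) s (d-s+1) l - pp d (n-2*d) d 1 l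
     = k * ((-3*(s-1)*n^2 + n*(2*s^2*k+8*s^2+s*k-14*s-6*k+4) + (-(s^3*k)-3*s^3+2*s^2*k+13*s^2+7*s*k-9*s+2*k^2-5*k+1)) + (-(4*s-5)*n + (2*s^2*k+7*s^2+s*k-10*s-5*k+3))*r + (2-s)*r^2)"
    unfolding dk lr by (rule fexp)
  have sa: "s = a+2" "k = b+1" by (auto simp: a_def b_def)
  have na: "2*n = (a+b+5)^2 + 2*t"
  proof -
    have e: "a+b+5 = d+2" by (simp add: a_def b_def k_def)
    show ?thesis unfolding e t_def by simp
  qed
  define gg where "gg = (-3*(s-1)*n^2 + n*(2*s^2*k+8*s^2+s*k-14*s-6*k+4) + (-(s^3*k)-3*s^3+2*s^2*k+13*s^2+7*s*k-9*s+2*k^2-5*k+1))"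
  define hh where "hh = (-(4*s-5)*n + (2*s^2*k+7*s^2+s*k-10*s-5*k+3))"
  define GG where "GG = 3*a^5 + 8*a^4*b + 43*a^4 + 10*a^3*b^2 + 98*a^3*b + 12*a^3*t + 272*a^3 + 8*a^2*b^3 + 102*a^2*b^2 + 16*a^2*b*t + 500*a^2*b + 92*a^2*t + 922*a^2 + 3*a*b^4 + 54*a*b^3 + 12*a*b^2*t + 380*a*b^2 + 108*a*b*t + 1270*a*b + 12*a*t^2 + 312*a*t + 1745*a + 3*b^4 + 52*b^3 + 12*b^2*t + 338*b^2 + 104*b*t + 1008*b + 12*t^2 + 252*t + 1187"
  define HH where "HH = 4*a^3 + 4*a^2*b + 25*a^2 + 4*a*b^2 + 28*a*b + 8*a*t + 76*a + 3*b^2 + 20*b + 6*t + 43"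
  have g1: "- 4 * gg = GG" unfolding gg_def GG_def by (rule gsub[OF sa na])
  have h1: "- 2 * hh = HH" unfolding hh_def HH_def by (rule hsub[OF sa na])
  have "0 < GG" unfolding GG_def
    using a0 b0 t0 by (intro add_nonneg_pos mult_nonneg_nonneg zero_le_power) auto
  then have gneg: "gg < 0" using g1 by linarith
  have "0 < HH" unfolding HH_def
    using a0 b0 t0 by (intro add_nonneg_pos mult_nonneg_nonneg zero_le_power) auto
  then have hneg: "hh < 0" using h1 by linarith
  have "hh*r \<le> 0" using hneg r0 by (simp add: mult_nonpos_nonneg)
  moreover have "(2-s)*r^2 \<le> 0" using s by (simp add: mult_nonpos_nonneg)
  ultimately have "gg + hh*r + (2-s)*r^2 < 0" using gneg by linarith
  moreover have "0 < k" using ds by (simp add: k_def)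
  ultimately show ?thesis unfolding eq gg_def[symmetric] hh_def[symmetric] by (simp add: mult_pos_neg)
qed

lemma I4:
  fixes d n l :: real
  assumes d: "2 \<le> d" and n: "8*d \<le> n" and l: "n \<le> l" "l \<le> n + 3*d - 1 - 6*d^2/n"
  shows "pp 1 (n - 1 - (d-1+1)*1) 1 (d-1+1) l - pp d (n-2*d) d 1 l < 0"
proof -
  define B where "B = n + 2*d - 2"
  define C where "C = n*(d+1) - 2*d^2 + d - 1"
  define U where "U = n + 3*d - 1 - 6*d^2/n"
  have n0: "0 < n" using d n by simp
  have eq: "pp 1 (n - 1 - (d-1+1)*1) 1 (d-1+1) l - pp d (n-2*d) d 1 l = (d-1) * (l*(l-B) - C)"
    unfolding B_def C_def pp_def det2_def by (simp add: eval_nat_numeral power_Suc algebra_simps)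
  define a where "a = d - 2"
  define t where "t = n - 8*d"
  have a0: "0 \<le> a" and t0: "0 \<le> t" using d n by (auto simp: a_def t_def)
  have Cpos: "0 < C"
  proof -
    have "C = 6*a^2 + a*t + 33*a + 3*t + 41" unfolding C_def a_def t_def by (simp add: eval_nat_numeral power_Suc algebra_simps)
    moreover have "0 < 6*a^2 + a*t + 33*a + 3*t + 41" using a0 t0 by (intro add_nonneg_pos mult_nonneg_nonneg zero_le_power) auto
    ultimately show ?thesis by simp
  qed
  have Un: "U*n = n^2 + (3*d-1)*n - 6*d^2" unfolding U_def using n0 by (simp add: field_simps power2_eq_square)
  have UB: "U*(U-B) < C"
  proof -
    have "n^2 * (U*(U-B) - C) = (U*n)*((U*n) - B*n) - C*n^2" by (simp add: eval_nat_numeral power_Suc algebra_simps)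
    also have "\<dots> = - (220*a^4 + 40*a^3*t + 1696*a^3 + a^2*t^2 + 224*a^2*t + 4896*a^2 + 3*a*t^2 + 416*a*t + 6272*a + 2*t^2 + 256*t + 3008)" unfolding Un unfolding B_def C_def a_def t_def by (simp add: eval_nat_numeral power_Suc algebra_simps)
    finally have e: "n^2 * (U*(U-B) - C) = - (220*a^4 + 40*a^3*t + 1696*a^3 + a^2*t^2 + 224*a^2*t + 4896*a^2 + 3*a*t^2 + 416*a*t + 6272*a + 2*t^2 + 256*t + 3008)" .
    have "0 < 220*a^4 + 40*a^3*t + 1696*a^3 + a^2*t^2 + 224*a^2*t + 4896*a^2 + 3*a*t^2 + 416*a*t + 6272*a + 2*t^2 + 256*t + 3008"
      using a0 t0 by (intro add_nonneg_pos mult_nonneg_nonneg zero_le_power) auto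
    then have "n^2 * (U*(U-B) - C) < 0" unfolding e by simp
    then show ?thesis using n0 by (simp add: mult_less_0_iff)
  qed
  have "l*(l-B) < C"
  proof (cases "l \<le> B")
    case True
    then have "l*(l-B) \<le> 0" using l n0 by (simp add: mult_nonneg_nonpos)
    then show ?thesis using Cpos by linarith
  next
    case False
    have "l*(l-B) \<le> U*(U-B)" using False l n0 unfolding U_def by (intro mult_mono) auto
    then show ?thesis using UB by linarith
  qed
  then show ?thesis unfolding eq using d by (simp add: mult_pos_neg)
qed



lemma cubic_pos:
  fixes x B C E :: real
  assumes x: "1 + \<bar>B\<bar> + \<bar>C\<bar> + \<bar>E\<bar> \<le> x"
  shows "0 < x^3 + B*x^2 + C*x + E"
proof -
  have x1: "1 \<le> x" using x by linarith
  have xx: "x \<le> x^2" using x1 by (simp add: power2_eq_square)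
  have "(1 + \<bar>B\<bar> + \<bar>C\<bar> + \<bar>E\<bar>) * x^2 \<le> x * x^2" using x by (intro mult_right_mono) auto
  then have h1: "x^2 + \<bar>B\<bar>*x^2 + \<bar>C\<bar>*x^2 + \<bar>E\<bar>*x^2 \<le> x^3" by (simp add: algebra_simps power3_eq_cube power2_eq_square)
  have h2: "- (\<bar>B\<bar>*x^2) \<le> B*x^2" using abs_ge_minus_self[of B] by (intro mult_right_mono[of "- \<bar>B\<bar>" B "x^2", simplified]) auto
  have h3: "- (\<bar>C\<bar>*x^2) \<le> C*x"
  proof -
    have "- (\<bar>C\<bar>*x^2) \<le> - (\<bar>C\<bar>*x)" using xx by (simp add: mult_left_mono)
    also have "\<dots> \<le> C*x" using x1 abs_ge_minus_self[of C] by (intro mult_right_mono[of "- \<bar>C\<bar>" C x, simplified]) auto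
    finally show ?thesis .
  qed
  have h4: "- (\<bar>E\<bar>*x^2) \<le> E"
  proof -
    have "\<bar>E\<bar> \<le> \<bar>E\<bar>*x^2" using xx x1 by (simp add: mult_le_cancel_left1)
    then show ?thesis by linarith
  qed
  have "0 < x^2" using x1 by simp
  then show ?thesis using h1 h2 h3 h4 by linarith
qed

lemma pp_grow:
  fixes a m q c x0 :: real
  shows "\<exists>M. x0 \<le> M \<and> 0 < pp a m q c M"
proof -
  define B where "B = - ((a-1) + (m-1) + (2*q*c - c - 1))"
  define C where "C = (a-1)*((m-1) + (2*q*c - c - 1)) + (m-1)*(2*q*c - c - 1) - 4*m*q*c - m*a - q*c*a"
  define E where "E = - (a-1)*((m-1)*(2*q*c - c - 1) - 4*m*q*c) - m*a*(c+1) - q*c*a*(m+1)"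
  define M where "M = max x0 (1 + \<bar>B\<bar> + \<bar>C\<bar> + \<bar>E\<bar>)"
  have e: "pp a m q c M = M^3 + B*M^2 + C*M + E"
    unfolding pp_def det2_def B_def C_def E_def by (simp add: eval_nat_numeral power_Suc algebra_simps)
  have "0 < M^3 + B*M^2 + C*M + E" by (rule cubic_pos) (simp add: M_def)
  then show ?thesis using e by (intro exI[of _ M]) (simp add: M_def)
qed

lemma pp_cont: "continuous_on S (\<lambda>l. pp a m q c l)"
  unfolding pp_def det2_def by (intro continuous_intros)

theorem mainTheorem5:
  fixes \<delta> n s :: nat
  assumes "\<delta> \<ge> 2"
    and "n \<ge> 8 * \<delta>"
    and "real n \<ge> (real \<delta>)^2 / 2 + 2 * real \<delta> + 2"
    and "1 \<le> s" and "s \<le> \<delta> - 1"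
  shows "lambda1 (distance_matrix
           (gjoin (complete_graph \<delta>) (gunion (complete_graph (n - 2 * \<delta>)) (copies \<delta> (complete_graph 1)))))
       < lambda1 (distance_matrix
           (gjoin (complete_graph s)
              (gunion (complete_graph (n - s - (\<delta> - s + 1) * s)) (copies s (complete_graph (\<delta> - s + 1))))))"
proof -
  note as = assms
  define d where "d = real \<delta>"
  define N where "N = real n"
  define S where "S = real s"
  define m2 where "m2 = n - s - (\<delta> - s + 1) * s"
  have d2: "2 \<le> d" using as(1) by (simp add: d_def)
  have N8: "8*d \<le> N" using as(2) unfolding d_def N_def by linarith
  have S1: "1 \<le> S" using as(4) by (simp add: S_def)
  have dS: "1 \<le> d - S" using as(1,5) unfolding d_def S_def by linarith
  have N2: "(d+2)^2 \<le> 2*N" using as(3) unfolding d_def N_def by (simp add: power2_eq_square algebra_simps)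
  have G1: "gjoin (complete_graph \<delta>) (gunion (complete_graph (n - 2 * \<delta>)) (copies \<delta> (complete_graph 1)))
      = BG \<delta> (n - 2*\<delta>) \<delta> 1" by (simp add: BG_def)
  have G2: "gjoin (complete_graph s) (gunion (complete_graph (n - s - (\<delta> - s + 1) * s)) (copies s (complete_graph (\<delta> - s + 1))))
      = BG s m2 s (\<delta> - s + 1)" by (simp add: BG_def m2_def)
  have rm1: "real (n - 2*\<delta>) = N - 2*d" using as(1,2) unfolding N_def d_def by (simp add: of_nat_diff)
  have rc2: "real (\<delta> - s + 1) = d - S + 1" using as(5) unfolding d_def S_def by (simp add: of_nat_diff)
  have sz: "s + (\<delta> - s + 1) * s \<le> n"
  proof -
    have h4: "4 * (S * (d - S + 1)) \<le> (d+1)^2"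
    proof -
      have "0 \<le> (d + 1 - 2*S)^2" by simp
      then show ?thesis by (simp add: power2_eq_square algebra_simps)
    qed
    have sq: "(d+2)^2 = (d+1)^2 + 2*d + 3" by (simp add: power2_eq_square algebra_simps)
    have cm: "(d - S + 1) * S = S * (d - S + 1)" by simp
    have "real (s + (\<delta> - s + 1) * s) = real s + real (\<delta> - s + 1) * real s"
      by (simp only: of_nat_add[of s] of_nat_mult)
    also have "\<dots> = S + (d - S + 1) * S" unfolding rc2 S_def ..
    also have "\<dots> \<le> N" unfolding cm using h4 sq N2 dS zero_le_power2[of "d+1"] by linarith
    finally show ?thesis unfolding N_def by linarith
  qed
  have rs: "real (s + (\<delta> - s + 1) * s) = S + (d - S + 1) * S"
  proof -
    have "real (s + (\<delta> - s + 1) * s) = real s + real (\<delta> - s + 1) * real s"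
      by (simp only: of_nat_add[of s] of_nat_mult)
    also have "\<dots> = S + (d - S + 1) * S" unfolding rc2 S_def ..
    finally show ?thesis .
  qed
  have m2e: "m2 = n - (s + (\<delta> - s + 1) * s)" unfolding m2_def by (simp only: diff_diff_left)
  have rm2: "real m2 = N - S - (d - S + 1) * S"
    unfolding m2e of_nat_diff[OF sz] rs N_def by simp
  define p1 where "p1 = (\<lambda>l. pp d (N - 2*d) d 1 l)"
  define p2 where "p2 = (\<lambda>l. pp S (N - S - (d - S + 1) * S) S (d - S + 1) l)"
  define U where "U = N + 3*d - 1 - 6*d^2/N"
  have Npos: "0 < N" using d2 N8 by simp
  have NU: "N \<le> U"
  proof -
    have "6*d^2/N \<le> 6*d^2/(8*d)" using d2 N8 by (intro divide_left_mono) auto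
    also have "\<dots> = 3*d/4" using d2 by (simp add: power2_eq_square)
    finally show ?thesis unfolding U_def using d2 by linarith
  qed
  have p1N: "p1 N < 0" unfolding p1_def by (rule I1[OF d2 N8])
  have p1U: "0 \<le> p1 U" unfolding p1_def U_def by (rule I2[OF d2 N8])
  obtain r1 where r1: "N \<le> r1" "r1 \<le> U" "p1 r1 = 0"
    using IVT'[of p1 N 0 U] p1N p1U NU pp_cont unfolding p1_def by fastforce
  have ppD1: "pp (real \<delta>) (real (n - 2*\<delta>)) (real \<delta>) (real 1) r1 = 0"
    using r1(3) unfolding p1_def rm1 d_def by simp
  have a1: "0 < \<delta>" and q1: "0 < (1::nat)" using as(1) by auto
  have r1d: "real \<delta> - 1 \<le> r1" "0 \<le> r1" using r1(1) N8 d2 unfolding d_def by linarith+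
  have ub: "x \<le> r1" if "eigenvalue (distance_matrix (BG \<delta> (n - 2*\<delta>) \<delta> 1)) x" for x
    using root_max[OF a1 q1 a1 r1d ppD1 that] .
  have r1e: "eigenvalue (distance_matrix (BG \<delta> (n - 2*\<delta>) \<delta> 1)) r1"
    using root_eig[OF a1 q1 a1 r1d(2) ppD1] .
  have fin1: "finite {x. eigenvalue (distance_matrix (BG \<delta> (n - 2*\<delta>) \<delta> 1)) x}"
    by (rule finite_eig[OF dm_carrier])
  have L1: "lambda1 (distance_matrix (BG \<delta> (n - 2*\<delta>) \<delta> 1)) \<le> r1"
    unfolding lambda1_def using fin1 r1e ub by (intro Max.boundedI) auto
  have dif: "p2 r1 - p1 r1 < 0"
  proof (cases "s = 1")
    case True
    then have "S = 1" by (simp add: S_def)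
    then show ?thesis unfolding p1_def p2_def using I4[OF d2 N8 r1(1)] r1(2) unfolding U_def by simp
  next
    case False
    then have "2 \<le> S" using as(4) by (simp add: S_def)
    then show ?thesis unfolding p1_def p2_def by (rule I3[OF _ dS N2 r1(1)])
  qed
  then have p2r1: "p2 r1 < 0" using r1(3) by simp
  obtain M where M: "r1 \<le> M" "0 < p2 M" using pp_grow unfolding p2_def by blast
  obtain r2 where r2: "r1 \<le> r2" "r2 \<le> M" "p2 r2 = 0"
    using IVT'[of p2 r1 0 M] p2r1 M pp_cont unfolding p2_def by fastforce
  have r12: "r1 < r2" using r2 p2r1 by (cases "r1 = r2") auto
  have ppD2: "pp (real s) (real m2) (real s) (real (\<delta> - s + 1)) r2 = 0"
    using r2(3) unfolding p2_def rm2 rc2 S_def d_def by simp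
  have a2: "0 < s" and c2: "0 < \<delta> - s + 1" using as(4) by auto
  have r2e: "eigenvalue (distance_matrix (BG s m2 s (\<delta> - s + 1))) r2"
    by (rule root_eig[OF a2 c2 a2 _ ppD2]) (use r12 r1d(2) in linarith)
  have fin2: "finite {x. eigenvalue (distance_matrix (BG s m2 s (\<delta> - s + 1))) x}"
    by (rule finite_eig[OF dm_carrier])
  have L2: "r2 \<le> lambda1 (distance_matrix (BG s m2 s (\<delta> - s + 1)))"
    unfolding lambda1_def using fin2 r2e by (intro Max_ge) auto
  show ?thesis unfolding G1 G2 using L1 L2 r12 by linarith
qed

end
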